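(* Let $m,n\ge 3$ with $m\neq n$. Let $\circ$ be any one of the four boolean operations union ($\cup$), intersection ($\cap$), difference ($\setminus$) and symmetric difference ($\oplus$). Then the state complexity of $U_m(a,b,\emptyset)\circ U_n(a,b,\emptyset)$ is exactly $mn$.
   Context: The state complexity of a regular language is the number of states of its minimal complete deterministic finite automaton (DFA). For $n\ge 3$, $\mathcal{U}_n(a,b,\emptyset)$ is the DFA over alphabet $\{a,b\}$ with state set $\{0,\dots,n-1\}$, initial state $0$, set of final states $\{n-1\}$, where input $a$ maps $i\mapsto i+1 \pmod n$ (a cycle of all states) and input $b$ swaps states $0$ and $1$ and fixes all other states. $U_n(a,b,\emptyset)$ is the language accepted by $\mathcal{U}_n(a,b,\emptyset)$. For languages $K,L$: $K\setminus L$ is set difference and $K\oplus L=(K\setminus L)\cup(L\setminus K)$. *)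

theory Defs
  imports Main
begin

datatype letter = LA | LB

text \<open>A complete DFA with k states, represented (up to renaming) by the state set {0..<k}:
  transition function delta, initial state q0, final states F.\<close>
definition is_dfa_for :: "nat \<Rightarrow> (nat \<Rightarrow> letter \<Rightarrow> nat) \<Rightarrow> nat \<Rightarrow> nat set \<Rightarrow> letter list set \<Rightarrow> bool" where
  "is_dfa_for k delta q0 F L \<longleftrightarrow>
     q0 < k \<and> (\<forall>q<k. \<forall>x. delta q x < k) \<and> F \<subseteq> {..<k} \<and>
     L = {w. foldl delta q0 w \<in> F}"

definition state_complexity :: "letter list set \<Rightarrow> nat" where
  "state_complexity L = (LEAST k. \<exists>delta q0 F. is_dfa_for k delta q0 F L)"

definition U_delta :: "nat \<Rightarrow> nat \<Rightarrow> letter \<Rightarrow> nat" where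
  "U_delta n i x = (case x of
       LA \<Rightarrow> (i + 1) mod n
     | LB \<Rightarrow> (if i = 0 then 1 else if i = 1 then 0 else i))"

definition U_lang :: "nat \<Rightarrow> letter list set" where
  "U_lang n = {w. foldl (U_delta n) 0 w = n - 1}"

definition symdiff :: "'a set \<Rightarrow> 'a set \<Rightarrow> 'a set" where
  "symdiff K L = (K - L) \<union> (L - K)"

end

theory Submission
  imports Defs "HOL-Number_Theory.Cong"
begin

lemma mcancel: "(a + k) mod (N::nat) = (b + k) mod N \<Longrightarrow> a mod N = b mod N"
  using cong_add_rcancel_nat[of a k b N] by (simp add: cong_def)

lemma U_delta_lt: "N \<ge> 2 \<Longrightarrow> i < N \<Longrightarrow> U_delta N i x < N"
  by (cases x) (auto simp: U_delta_def)

lemma foldl_U_lt: "N \<ge> 2 \<Longrightarrow> i < N \<Longrightarrow> foldl (U_delta N) i w < N"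
  by (induction w arbitrary: i) (auto simp: U_delta_lt)

lemma U_delta_inj:
  assumes "N \<ge> 2" "i < N" "i' < N" "U_delta N i x = U_delta N i' x" shows "i = i'"
proof (cases x)
  case LA
  then have "(i + 1) mod N = (i' + 1) mod N" using assms by (simp add: U_delta_def)
  then have "i mod N = i' mod N" by (rule mcancel)
  then show ?thesis using assms by simp
next
  case LB
  then show ?thesis using assms by (auto simp: U_delta_def split: if_splits)
qed

lemma foldl_U_inj: "N \<ge> 2 \<Longrightarrow> i < N \<Longrightarrow> i' < N \<Longrightarrow> foldl (U_delta N) i w = foldl (U_delta N) i' w \<Longrightarrow> i = i'"
proof (induction w arbitrary: i i')
  case Nil then show ?case by simp
next
  case (Cons x w)
  then have "U_delta N i x = U_delta N i' x" using U_delta_lt by simp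
  then show ?case using Cons.prems U_delta_inj by blast
qed

lemma foldl_U_rep: "i < N \<Longrightarrow> foldl (U_delta N) i (replicate r LA) = (i + r) mod N"
proof (induction r arbitrary: i)
  case 0 then show ?case by simp
next
  case (Suc r)
  have "(i + 1) mod N < N" using Suc.prems by simp
  then have "foldl (U_delta N) ((i + 1) mod N) (replicate r LA) = ((i+1) mod N + r) mod N"
    using Suc.IH by blast
  moreover have "U_delta N i LA = (i+1) mod N" by (simp add: U_delta_def)
  moreover have "foldl (U_delta N) i (replicate (Suc r) LA) = foldl (U_delta N) (U_delta N i LA) (replicate r LA)" by simp
  ultimately show ?case by (simp add: mod_add_left_eq)
qed

definition swp :: "nat \<Rightarrow> nat \<Rightarrow> nat \<Rightarrow> nat" where
  "swp N k i = (if i = k mod N then (k+1) mod N else if i = (k+1) mod N then k mod N else i)"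

definition tw :: "nat \<Rightarrow> nat \<Rightarrow> letter list" where
  "tw L k = replicate (L - k) LA @ [LB] @ replicate k LA"

lemma mod_suc_ne: "(N::nat) \<ge> 2 \<Longrightarrow> (k + 1) mod N \<noteq> k mod N"
proof
  assume "N \<ge> 2" "(k + 1) mod N = k mod N"
  then have "(1 + k) mod N = (0 + k) mod N" by (simp add: add.commute)
  then have "1 mod N = 0 mod N" by (rule mcancel)
  then show False using \<open>N \<ge> 2\<close> by simp
qed

lemma tw_act:
  assumes "N \<ge> 2" "N dvd L" "k \<le> L" "i < N"
  shows "foldl (U_delta N) i (tw L k) = swp N k i"
proof -
  define p where "p = (i + (L - k)) mod N"
  have pN: "p < N" using assms by (simp add: p_def)
  have ip: "(p + k) mod N = i"
  proof -
    have "(p + k) mod N = (i + (L-k) + k) mod N" by (simp add: p_def mod_add_left_eq)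
    also have "i + (L-k) + k = i + L" using assms by simp
    also have "(i + L) mod N = i" using assms by (auto elim!: dvdE)
    finally show ?thesis .
  qed
  define p' where "p' = (if p = 0 then 1 else if p = 1 then 0 else p)"
  have p'N: "p' < N" using pN assms by (simp add: p'_def)
  have "foldl (U_delta N) i (tw L k) = foldl (U_delta N) (U_delta N p LB) (replicate k LA)"
    using assms by (simp add: tw_def foldl_U_rep p_def)
  also have "U_delta N p LB = p'" by (simp add: U_delta_def p'_def)
  also have "foldl (U_delta N) p' (replicate k LA) = (p' + k) mod N"
    using p'N by (simp add: foldl_U_rep)
  finally have F: "foldl (U_delta N) i (tw L k) = (p' + k) mod N" .
  have ne: "(k + 1) mod N \<noteq> k mod N" using assms mod_suc_ne by blast
  show ?thesis
  proof (cases "p = 0")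
    case True
    then have "i = k mod N" using ip by simp
    then show ?thesis using F True by (simp add: p'_def swp_def add.commute)
  next
    case False
    note F0 = False
    show ?thesis
    proof (cases "p = 1")
      case True
      then have "i = (k + 1) mod N" using ip by (simp add: add.commute)
      then show ?thesis using F True ne by (simp add: p'_def swp_def)
    next
      case False
      have "i \<noteq> k mod N"
      proof
        assume "i = k mod N"
        then have "(p + k) mod N = (0 + k) mod N" using ip by simp
        then have "p mod N = 0 mod N" by (rule mcancel)
        then show False using pN F0 by simp
      qed
      moreover have "i \<noteq> (k+1) mod N"
      proof
        assume "i = (k+1) mod N"
        then have "(p + k) mod N = (1 + k) mod N" using ip by (simp add: add.commute)
        then have "p mod N = 1 mod N" by (rule mcancel)
        then show False using pN False assms by simp
      qed
      ultimately show ?thesis using F F0 False ip by (simp add: p'_def swp_def)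
    qed
  qed
qed

lemma swp_lt: "N > 0 \<Longrightarrow> i < N \<Longrightarrow> swp N k i < N"
  by (simp add: swp_def)

lemma swp_invol: "N \<ge> 2 \<Longrightarrow> i < N \<Longrightarrow> swp N k (swp N k i) = i"
  using mod_suc_ne[of N k] by (auto simp: swp_def)

lemma swp_add: "swp N (k + N) = swp N k"
proof -
  have 1: "(k + N) mod N = k mod N" by simp
  have 2: "(k + N + 1) mod N = (k + 1) mod N"
    by (metis add.commute add.left_commute mod_add_self2)
  show ?thesis by (rule ext) (simp only: swp_def 1 2)
qed
definition Dw :: "nat \<Rightarrow> nat \<Rightarrow> nat \<Rightarrow> letter list" where
  "Dw s l d = tw (s*l) d @ tw (s*l) (d + s)"

lemma sl_bound: assumes "3 \<le> (s::nat)" "s < l" "d < l" shows "d + s \<le> s * l"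
proof -
  have "3 * l \<le> s * l" using assms by (intro mult_le_mono1) simp
  then show ?thesis using assms by linarith
qed

lemma D_first:
  assumes "3 \<le> s" "s < l" "d < l" "i < s"
  shows "foldl (U_delta s) i (Dw s l d) = i"
proof -
  have b: "d + s \<le> s * l" "d \<le> s * l" using sl_bound[OF assms(1-3)] by auto
  have "foldl (U_delta s) i (Dw s l d) = swp s (d + s) (swp s d i)"
    using assms b swp_lt[of s i d]
    by (simp add: Dw_def tw_act)
  also have "\<dots> = i" using assms by (simp add: swp_add swp_invol)
  finally show ?thesis .
qed

lemma D_second:
  assumes "3 \<le> s" "s < l" "d < l" "j < l"
  shows "foldl (U_delta l) j (Dw s l d) = swp l (d + s) (swp l d j)"
proof -
  have b: "d + s \<le> s * l" "d \<le> s * l" using sl_bound[OF assms(1-3)] by auto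
  show ?thesis
    using assms b swp_lt[of l j d]
    by (simp add: Dw_def tw_act)
qed

lemma D_next:
  assumes "3 \<le> s" "s < l" "j < l"
  shows "foldl (U_delta l) j (Dw s l j) = (j + 1) mod l"
proof -
  have 1: "swp l j j = (j + 1) mod l" using assms by (simp add: swp_def)
  have n1: "(j + 1) mod l \<noteq> (j + s) mod l"
  proof
    assume "(j + 1) mod l = (j + s) mod l"
    then have "(1 + j) mod l = (s + j) mod l" by (simp add: add.commute)
    then have "1 mod l = s mod l" by (rule mcancel)
    then show False using assms by simp
  qed
  have n2: "(j + 1) mod l \<noteq> (j + s + 1) mod l"
  proof
    assume "(j + 1) mod l = (j + s + 1) mod l"
    then have "(0 + (j+1)) mod l = (s + (j+1)) mod l" by (simp add: ac_simps)
    then have "0 mod l = s mod l" by (rule mcancel)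
    then show False using assms by simp
  qed
  show ?thesis using D_second[OF assms(1,2,3,3)] 1 n1 n2 by (simp add: swp_def)
qed

lemma D_xor:
  assumes "3 \<le> s" "s < l"
  shows "foldl (U_delta l) 0 (Dw s l (l-2)) = 0"
    and "foldl (U_delta l) (l - 1) (Dw s l (l-2)) \<noteq> l - 1"
proof -
  have m1: "(l - 2) mod l = l - 2" "(l - 2 + 1) mod l = l - 1" using assms by auto
  have e: "l - 2 + s = (s - 2) + l" "l - 2 + s + 1 = (s - 1) + l" using assms by auto
  have m2a: "(l - 2 + s) mod l = s - 2"
    unfolding e mod_add_self2 using assms by auto
  have "(l - 2 + s + 1) mod l = Suc ((l - 2 + s) mod l) mod l" by (simp add: mod_Suc_eq)
  then have "(l - 2 + s + 1) mod l = s - 1" using m2a assms by simp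
  note m2 = m2a this
  have "swp l (l - 2 + s) (swp l (l - 2) 0) = 0"
    unfolding swp_def m1 m2 using assms by auto
  then show "foldl (U_delta l) 0 (Dw s l (l-2)) = 0"
    using D_second[of s l "l-2" 0] assms by simp
  have "swp l (l - 2 + s) (swp l (l - 2) (l-1)) \<noteq> l - 1"
    unfolding swp_def m1 m2 using assms by auto
  then show "foldl (U_delta l) (l - 1) (Dw s l (l-2)) \<noteq> l - 1"
    using D_second[of s l "l-2" "l-1"] assms by simp
qed

lemma reach:
  assumes "3 \<le> s" "s < l" "i < s" "j < l" "i2 < s" "j2 < l"
  shows "\<exists>w. foldl (U_delta s) i w = i2 \<and> foldl (U_delta l) j w = j2"
proof -
  define k where "k = i2 + s - i"
  have 1: "foldl (U_delta s) i (replicate k LA) = i2"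
  proof -
    have "i + k = i2 + s" using assms by (simp add: k_def)
    then show ?thesis using assms by (simp add: foldl_U_rep)
  qed
  define j1 where "j1 = foldl (U_delta l) j (replicate k LA)"
  have j1l: "j1 < l" using assms by (simp add: j1_def foldl_U_rep)
  have "\<exists>w. foldl (U_delta s) i2 w = i2 \<and> foldl (U_delta l) j1 w = (j1 + c) mod l" for c
  proof (induction c)
    case 0 then show ?case using j1l by (intro exI[of _ "[]"]) simp
  next
    case (Suc c)
    then obtain w where w: "foldl (U_delta s) i2 w = i2" "foldl (U_delta l) j1 w = (j1 + c) mod l" by blast
    have cl: "(j1 + c) mod l < l" using assms by simp
    have "foldl (U_delta s) i2 (w @ Dw s l ((j1 + c) mod l)) = i2"
      using w D_first[OF assms(1,2) cl assms(5)] by simp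
    moreover have "foldl (U_delta l) j1 (w @ Dw s l ((j1 + c) mod l)) = (j1 + Suc c) mod l"
      using w D_next[OF assms(1,2) cl] by (simp add: mod_Suc_eq)
    ultimately show ?case by blast
  qed
  then obtain w where w: "foldl (U_delta s) i2 w = i2" "foldl (U_delta l) j1 w = (j1 + (j2 + l - j1)) mod l" by blast
  have "(j1 + (j2 + l - j1)) mod l = j2" using j1l assms by simp
  then have "foldl (U_delta s) i (replicate k LA @ w) = i2 \<and> foldl (U_delta l) j (replicate k LA @ w) = j2"
    using w 1 by (simp add: j1_def)
  then show ?thesis by blast
qed


definition goodf :: "(bool \<Rightarrow> bool \<Rightarrow> bool) \<Rightarrow> bool" where
  "goodf f \<longleftrightarrow> (f True True \<noteq> f True False \<or> f False True \<noteq> f False False)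
     \<and> (f True True \<noteq> f False True \<or> f True False \<noteq> f False False)
     \<and> (f True True \<noteq> f False False \<or> f True False \<noteq> f False False
        \<or> (f False True \<noteq> f False False \<and> f False True \<noteq> f True False))"

lemma disting:
  assumes s: "3 \<le> s" "s < l" and r: "i < s" "j < l" "i' < s" "j' < l" and ne: "(i,j) \<noteq> (i',j')"
    and g: "goodf f"
  shows "\<exists>z. f (foldl (U_delta s) i z = s - 1) (foldl (U_delta l) j z = l - 1)
           \<noteq> f (foldl (U_delta s) i' z = s - 1) (foldl (U_delta l) j' z = l - 1)"
proof -
  have s2: "s \<ge> 2" "l \<ge> 2" using s by auto
  have lts: "s - 1 < s" "l - 1 < l" "0 < s" "0 < l" using s by auto
  have injs: "foldl (U_delta s) i z \<noteq> foldl (U_delta s) i' z" if "i \<noteq> i'" for z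
    using foldl_U_inj[OF s2(1) r(1) r(3)] that by blast
  have injl: "foldl (U_delta l) j z \<noteq> foldl (U_delta l) j' z" if "j \<noteq> j'" for z
    using foldl_U_inj[OF s2(2) r(2) r(4)] that by blast
  show ?thesis
  proof (cases "i = i'")
    case True
    then have jj: "j \<noteq> j'" using ne by simp
    from g obtain x0 where x0: "f x0 True \<noteq> f x0 False" unfolding goodf_def by blast
    define a where "a = (if x0 then s - 1 else 0)"
    have "a < s" using s by (simp add: a_def)
    then obtain z where z: "foldl (U_delta s) i z = a" "foldl (U_delta l) j z = l - 1"
      using reach[OF s r(1,2) \<open>a < s\<close> lts(2)] by blast
    have "(a = s - 1) = x0" using s by (simp add: a_def)
    then show ?thesis using z True injl[OF jj, of z] x0 by (intro exI[of _ z]) auto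
  next
    case False
    note ii = False
    show ?thesis
    proof (cases "j = j'")
      case True
      from g obtain y0 where y0: "f True y0 \<noteq> f False y0" unfolding goodf_def by blast
      define b where "b = (if y0 then l - 1 else 0)"
      have "b < l" using s by (simp add: b_def)
      then obtain z where z: "foldl (U_delta s) i z = s - 1" "foldl (U_delta l) j z = b"
        using reach[OF s r(1,2) lts(1) \<open>b < l\<close>] by blast
      have "(b = l - 1) = y0" using s by (simp add: b_def)
      then show ?thesis using z True injs[OF ii, of z] y0 by (intro exI[of _ z]) auto
    next
      case False
      note jj = False
      have C: "f True True \<noteq> f False False \<or> f True False \<noteq> f False False
        \<or> (f False True \<noteq> f False False \<and> f False True \<noteq> f True False)"
        using g unfolding goodf_def by blast
      then show ?thesis
      proof (elim disjE)
        assume c: "f True True \<noteq> f False False"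
        obtain z where z: "foldl (U_delta s) i z = s - 1" "foldl (U_delta l) j z = l - 1"
          using reach[OF s r(1,2) lts(1,2)] by blast
        show ?thesis using z injs[OF ii, of z] injl[OF jj, of z] c by (intro exI[of _ z]) auto
      next
        assume c: "f True False \<noteq> f False False"
        obtain z where z: "foldl (U_delta s) i z = s - 1" "foldl (U_delta l) j z = 0"
          using reach[OF s r(1,2) lts(1,4)] by blast
        define p where "p = foldl (U_delta s) i' z"
        define q where "q = foldl (U_delta l) j' z"
        have p: "p \<noteq> s - 1" "p < s" using injs[OF ii, of z] z s r by (auto simp: p_def foldl_U_lt)
        have q: "q \<noteq> 0" "q < l" using injl[OF jj, of z] z s r by (auto simp: q_def foldl_U_lt)
        show ?thesis
        proof (cases "q = l - 1")
          case False
          then show ?thesis using z p q c by (intro exI[of _ z]) (auto simp: p_def q_def)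
        next
          case True
          define z' where "z' = z @ Dw s l (l - 2)"
          have l2: "l - 2 < l" using s by simp
          have "foldl (U_delta s) i z' = s - 1" using z D_first[OF s l2, of "s-1"] s by (simp add: z'_def)
          moreover have "foldl (U_delta l) j z' = 0" using z D_xor(1)[OF s] by (simp add: z'_def)
          moreover have "foldl (U_delta s) i' z' = p" using D_first[OF s l2 p(2)] by (simp add: z'_def p_def)
          moreover have "foldl (U_delta l) j' z' \<noteq> l - 1" using D_xor(2)[OF s] True by (simp add: z'_def q_def)
          ultimately show ?thesis using p c s by (intro exI[of _ z']) auto
        qed
      next
        assume c: "f False True \<noteq> f False False \<and> f False True \<noteq> f True False"
        obtain z where z: "foldl (U_delta s) i z = 0" "foldl (U_delta l) j z = l - 1"
          using reach[OF s r(1,2) lts(3,2)] by blast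
        have e3: "(foldl (U_delta l) j' z = l - 1) = False" using injl[OF jj, of z] z by simp
        have e1: "(foldl (U_delta s) i z = s - 1) = False" using s z by simp
        have e2: "(foldl (U_delta l) j z = l - 1) = True" using z by simp
        show ?thesis
        proof (rule exI[of _ z], unfold e1 e2 e3)
          show "f False True \<noteq> f (foldl (U_delta s) i' z = s - 1) False"
            using c by (metis (full_types))
        qed
      qed
    qed
  qed
qed

lemma foldl_dfa_lt: "q < k \<Longrightarrow> (\<forall>q<k. \<forall>x. delta q x < k) \<Longrightarrow> foldl delta q w < k"
  by (induction w arbitrary: q) auto

lemma lower:
  assumes s: "3 \<le> s" "s < l" and g: "goodf f"
    and dfa: "is_dfa_for k delta q0 F {w. f (foldl (U_delta s) 0 w = s - 1) (foldl (U_delta l) 0 w = l - 1)}"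
  shows "s * l \<le> k"
proof -
  let ?A = "{..<s} \<times> {..<l}"
  have lt0: "0 < s" "0 < l" using s by auto
  have "\<forall>p \<in> ?A. \<exists>w. foldl (U_delta s) 0 w = fst p \<and> foldl (U_delta l) 0 w = snd p"
  proof
    fix p assume "p \<in> ?A"
    then have "fst p < s" "snd p < l" by auto
    then show "\<exists>w. foldl (U_delta s) 0 w = fst p \<and> foldl (U_delta l) 0 w = snd p"
      using reach[OF s lt0] by blast
  qed
  from bchoice[OF this] obtain W where W0: "\<forall>p \<in> ?A. foldl (U_delta s) 0 (W p) = fst p \<and> foldl (U_delta l) 0 (W p) = snd p"
    by (elim exE)
  have W: "foldl (U_delta s) 0 (W p) = fst p \<and> foldl (U_delta l) 0 (W p) = snd p" if "p \<in> ?A" for p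
    using W0 that by blast
  define gg where "gg p = foldl delta q0 (W p)" for p
  have Leq: "{w. f (foldl (U_delta s) 0 w = s - 1) (foldl (U_delta l) 0 w = l - 1)} = {w. foldl delta q0 w \<in> F}"
    using dfa unfolding is_dfa_for_def by (elim conjE)
  have mem: "f (foldl (U_delta s) 0 w = s - 1) (foldl (U_delta l) 0 w = l - 1)
     \<longleftrightarrow> foldl delta q0 w \<in> F" for w
  proof -
    have "w \<in> {w. f (foldl (U_delta s) 0 w = s - 1) (foldl (U_delta l) 0 w = l - 1)} \<longleftrightarrow> w \<in> {w. foldl delta q0 w \<in> F}"
      by (simp only: Leq)
    then show ?thesis by (simp only: mem_Collect_eq)
  qed
  have inj: "inj_on gg ?A"
  proof (rule inj_onI)
    fix p p' assume p: "p \<in> ?A" and p': "p' \<in> ?A" and eq: "gg p = gg p'"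
    show "p = p'"
    proof (rule ccontr)
      assume ne: "p \<noteq> p'"
      obtain i j i' j' where ij: "p = (i,j)" "p' = (i',j')" by force
      have r: "i < s" "j < l" "i' < s" "j' < l" using p p' ij by auto
      have ne2: "(i,j) \<noteq> (i',j')" using ne ij by simp
      obtain z where z: "f (foldl (U_delta s) i z = s - 1) (foldl (U_delta l) j z = l - 1)
           \<noteq> f (foldl (U_delta s) i' z = s - 1) (foldl (U_delta l) j' z = l - 1)"
        using disting[OF s r ne2 g] by blast
      have Wp: "foldl (U_delta s) 0 (W p) = i" "foldl (U_delta l) 0 (W p) = j" using W[OF p] ij by auto
      have Wp': "foldl (U_delta s) 0 (W p') = i'" "foldl (U_delta l) 0 (W p') = j'" using W[OF p'] ij by auto
      have "foldl delta q0 (W p @ z) = foldl delta q0 (W p' @ z)" using eq by (simp add: gg_def)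
      then have "f (foldl (U_delta s) 0 (W p @ z) = s - 1) (foldl (U_delta l) 0 (W p @ z) = l - 1)
        \<longleftrightarrow> f (foldl (U_delta s) 0 (W p' @ z) = s - 1) (foldl (U_delta l) 0 (W p' @ z) = l - 1)"
        unfolding mem by simp
      then have "f (foldl (U_delta s) i z = s - 1) (foldl (U_delta l) j z = l - 1)
        \<longleftrightarrow> f (foldl (U_delta s) i' z = s - 1) (foldl (U_delta l) j' z = l - 1)"
        unfolding foldl_append Wp Wp' .
      then show False using z by blast
    qed
  qed
  have d1: "q0 < k" and d2: "\<forall>q<k. \<forall>x. delta q x < k" using dfa unfolding is_dfa_for_def by blast+
  have sub: "gg ` ?A \<subseteq> {..<k}"
    unfolding gg_def using foldl_dfa_lt[OF d1 d2] by blast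
  have "card ?A \<le> card {..<k}" by (rule card_inj_on_le[OF inj sub]) simp
  then show ?thesis by (simp add: card_cartesian_product)
qed

definition pdelta :: "nat \<Rightarrow> nat \<Rightarrow> nat \<Rightarrow> letter \<Rightarrow> nat" where
  "pdelta m n q x = U_delta m (q div n) x * n + U_delta n (q mod n) x"

lemma prod_lt: "i < m \<Longrightarrow> j < n \<Longrightarrow> i * n + j < m * (n::nat)"
proof -
  assume a: "i < m" "j < n"
  have "Suc i * n \<le> m * n" using a by (intro mult_le_mono1) simp
  then show ?thesis using a by simp
qed

lemma pfold: "2 \<le> m \<Longrightarrow> 2 \<le> n \<Longrightarrow> i < m \<Longrightarrow> j < n \<Longrightarrow>
   foldl (pdelta m n) (i*n+j) w = foldl (U_delta m) i w * n + foldl (U_delta n) j w"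
proof (induction w arbitrary: i j)
  case Nil then show ?case by simp
next
  case (Cons x w)
  have "pdelta m n (i*n+j) x = U_delta m i x * n + U_delta n j x"
    using Cons.prems by (simp add: pdelta_def)
  then show ?case using Cons U_delta_lt by simp
qed

definition LangF :: "(bool \<Rightarrow> bool \<Rightarrow> bool) \<Rightarrow> nat \<Rightarrow> nat \<Rightarrow> letter list set" where
  "LangF f m n = {w. f (foldl (U_delta m) 0 w = m - 1) (foldl (U_delta n) 0 w = n - 1)}"

lemma upper:
  assumes "2 \<le> m" "2 \<le> n"
  shows "is_dfa_for (m*n) (pdelta m n) 0 {q. q < m*n \<and> f (q div n = m - 1) (q mod n = n - 1)} (LangF f m n)"
  unfolding is_dfa_for_def
proof (intro conjI allI impI)
  show "0 < m * n" using assms by simp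
  fix q x assume q: "q < m * n"
  have "q div n < m" using q by (simp add: less_mult_imp_div_less)
  moreover have "q mod n < n" using assms by simp
  ultimately show "pdelta m n q x < m * n"
    unfolding pdelta_def using assms U_delta_lt prod_lt by blast
next
  show "{q. q < m * n \<and> f (q div n = m - 1) (q mod n = n - 1)} \<subseteq> {..<m * n}" by auto
next
  have "foldl (pdelta m n) 0 w = foldl (U_delta m) 0 w * n + foldl (U_delta n) 0 w" for w
    using pfold[OF assms, of 0 0 w] assms by simp
  moreover have "foldl (U_delta m) 0 w < m" "foldl (U_delta n) 0 w < n" for w
    using assms foldl_U_lt by auto
  ultimately have "foldl (pdelta m n) 0 w \<in> {q. q < m * n \<and> f (q div n = m - 1) (q mod n = n - 1)}
      \<longleftrightarrow> f (foldl (U_delta m) 0 w = m - 1) (foldl (U_delta n) 0 w = n - 1)" for w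
  proof -
    assume e: "\<And>w. foldl (pdelta m n) 0 w = foldl (U_delta m) 0 w * n + foldl (U_delta n) 0 w"
      and l1: "\<And>w. foldl (U_delta m) 0 w < m" and l2: "\<And>w. foldl (U_delta n) 0 w < n"
    define a where "a = foldl (U_delta m) 0 w"
    define b where "b = foldl (U_delta n) 0 w"
    have "a < m" "b < n" using l1 l2 by (auto simp: a_def b_def)
    moreover have "(a * n + b) div n = a" "(a * n + b) mod n = b" using \<open>b < n\<close> by auto
    ultimately show ?thesis unfolding e a_def[symmetric] b_def[symmetric] using prod_lt by auto
  qed
  then show "LangF f m n = {w. foldl (pdelta m n) 0 w \<in> {q. q < m * n \<and> f (q div n = m - 1) (q mod n = n - 1)}}"
    unfolding LangF_def by blast
qed

lemma sc_general:
  assumes "m \<ge> 3" "n \<ge> 3" "m \<noteq> n" "goodf f" "goodf (\<lambda>a b. f b a)"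
  shows "state_complexity (LangF f m n) = m * n"
  unfolding state_complexity_def
proof (rule Least_equality)
  have "is_dfa_for (m*n) (pdelta m n) 0 {q. q < m*n \<and> f (q div n = m - 1) (q mod n = n - 1)} (LangF f m n)"
    using upper assms by simp
  then show "\<exists>delta q0 F. is_dfa_for (m*n) delta q0 F (LangF f m n)" by blast
next
  fix k assume "\<exists>delta q0 F. is_dfa_for k delta q0 F (LangF f m n)"
  then obtain delta q0 F where d: "is_dfa_for k delta q0 F (LangF f m n)" by blast
  show "m * n \<le> k"
  proof (cases "m < n")
    case True
    then show ?thesis using lower[OF assms(1) True assms(4)] d by (simp add: LangF_def)
  next
    case False
    then have nm: "n < m" using assms by simp
    have "LangF f m n = {w. (\<lambda>a b. f b a) (foldl (U_delta n) 0 w = n - 1) (foldl (U_delta m) 0 w = m - 1)}"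
      by (simp add: LangF_def)
    then have "n * m \<le> k" using lower[OF assms(2) nm assms(5)] d by simp
    then show ?thesis by (simp add: mult.commute)
  qed
qed

theorem theorem1:
  fixes m n :: nat
  assumes "m \<ge> 3" and "n \<ge> 3" and "m \<noteq> n"
  shows "state_complexity (U_lang m \<union> U_lang n) = m * n
       \<and> state_complexity (U_lang m \<inter> U_lang n) = m * n
       \<and> state_complexity (U_lang m - U_lang n) = m * n
       \<and> state_complexity (symdiff (U_lang m) (U_lang n)) = m * n"
proof -
  have 1: "U_lang m \<union> U_lang n = LangF (\<lambda>a b. a \<or> b) m n" by (auto simp: U_lang_def LangF_def)
  have 2: "U_lang m \<inter> U_lang n = LangF (\<lambda>a b. a \<and> b) m n" by (auto simp: U_lang_def LangF_def)
  have 3: "U_lang m - U_lang n = LangF (\<lambda>a b. a \<and> \<not> b) m n" by (auto simp: U_lang_def LangF_def)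
  have 4: "symdiff (U_lang m) (U_lang n) = LangF (\<lambda>a b. a \<noteq> b) m n"
    by (auto simp: U_lang_def LangF_def symdiff_def)
  show ?thesis unfolding 1 2 3 4
    using sc_general[OF assms] by (simp add: goodf_def)
qed

end
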